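(* Let $X$ be an infinite connected normal Hausdorff space which has no quotient space homeomorphic to $[0,1]$ (i.e. admits no continuous quotient surjection onto $[0,1]$). Then $X$ is punctiform and $X$ is not locally connected.
   Context: A space is punctiform if it contains no connected compact subset with more than one point. A surjection $f\colon X\to Y$ is a quotient map if for every $G\subseteq Y$, $G$ is open in $Y$ iff $f^{-1}(G)$ is open in $X$. *)

theory Defs
  imports "HOL-Analysis.Analysis"
begin

definition punctiform :: "'a topology \<Rightarrow> bool" where
  "punctiform X \<longleftrightarrow>
     (\<forall>C. C \<subseteq> topspace X \<and> compactin X C \<and> connectedin X C \<longrightarrow>
          \<not> (\<exists>x y. x \<in> C \<and> y \<in> C \<and> x \<noteq> y))"

end

theory Submission
  imports Defs
begin

lemma Y_topology:
  fixes X :: "'a topology" and f :: "'a \<Rightarrow> real"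
  shows "istopology (\<lambda>U. U \<subseteq> {0..1::real} \<and> openin X {x \<in> topspace X. f x \<in> U})"
proof -
  have I: "S \<inter> T \<subseteq> {0..1} \<and> openin X {x \<in> topspace X. f x \<in> S \<inter> T}"
    if S: "S \<subseteq> {0..1} \<and> openin X {x \<in> topspace X. f x \<in> S}"
    and T: "T \<subseteq> {0..1} \<and> openin X {x \<in> topspace X. f x \<in> T}" for S T :: "real set"
  proof -
    have "{x \<in> topspace X. f x \<in> S \<inter> T} = {x \<in> topspace X. f x \<in> S} \<inter> {x \<in> topspace X. f x \<in> T}"
      by auto
    moreover have "openin X ({x \<in> topspace X. f x \<in> S} \<inter> {x \<in> topspace X. f x \<in> T})"
      using S T by (intro openin_Int) auto
    ultimately show ?thesis using S by auto
  qed
  have U: "\<Union>K \<subseteq> {0..1} \<and> openin X {x \<in> topspace X. f x \<in> \<Union>K}"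
    if K: "\<forall>k\<in>K. k \<subseteq> {0..1} \<and> openin X {x \<in> topspace X. f x \<in> k}" for K :: "real set set"
  proof -
    have "{x \<in> topspace X. f x \<in> \<Union>K} = \<Union>((\<lambda>k. {x \<in> topspace X. f x \<in> k}) ` K)"
      by auto
    moreover have "openin X (\<Union>((\<lambda>k. {x \<in> topspace X. f x \<in> k}) ` K))"
      using K by (intro openin_Union) auto
    ultimately show ?thesis using K by auto
  qed
  show ?thesis
    unfolding istopology_def
  proof (rule conjI)
    show "\<forall>S T. (\<lambda>U. U \<subseteq> {0..1::real} \<and> openin X {x \<in> topspace X. f x \<in> U}) S \<longrightarrow>
      (\<lambda>U. U \<subseteq> {0..1::real} \<and> openin X {x \<in> topspace X. f x \<in> U}) T \<longrightarrow>
      (\<lambda>U. U \<subseteq> {0..1::real} \<and> openin X {x \<in> topspace X. f x \<in> U}) (S \<inter> T)"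
      using I by simp
    show "\<forall>K. (\<forall>k\<in>K. (\<lambda>U. U \<subseteq> {0..1::real} \<and> openin X {x \<in> topspace X. f x \<in> U}) k) \<longrightarrow>
      (\<lambda>U. U \<subseteq> {0..1::real} \<and> openin X {x \<in> topspace X. f x \<in> U}) (\<Union>K)"
      using U by simp
  qed
qed

lemma lc_quotient:
  assumes cX: "connected_space X" and lcX: "locally_connected_space X"
    and f: "continuous_map X (top_of_set {0..1::real}) f"
    and surj: "f ` topspace X = {0..1}"
  shows "quotient_map X (top_of_set {0..1::real}) f"
proof -
  have fX: "\<And>x. x \<in> topspace X \<Longrightarrow> f x \<in> {0..1::real}"
    using surj by auto
  have fr: "continuous_map X euclideanreal f"
    using f continuous_map_in_subtopology by blast
  define Y where "Y = topology (\<lambda>U. U \<subseteq> {0..1::real} \<and> openin X {x \<in> topspace X. f x \<in> U})"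
  have oY: "openin Y U \<longleftrightarrow> U \<subseteq> {0..1::real} \<and> openin X {x \<in> topspace X. f x \<in> U}" for U
    unfolding Y_def using Y_topology[of X f] by simp
  have tY: "topspace Y = {0..1}"
  proof -
    have "{x \<in> topspace X. f x \<in> {0..1}} = topspace X" using fX by auto
    then have "openin Y {0..1}" using oY by auto
    then have "{0..1} \<subseteq> topspace Y" by (simp add: openin_subset)
    moreover have "topspace Y \<subseteq> {0..1}" using oY[of "topspace Y"] by simp
    ultimately show ?thesis by blast
  qed
  have qY: "quotient_map X Y f"
    unfolding quotient_map_def tY using surj oY by auto
  have lcY: "locally_connected_space Y"
    using locally_connected_space_quotient_map_image[OF lcX qY] .
  have idc: "continuous_map Y (top_of_set {0..1::real}) id"
    unfolding continuous_map_def tY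
  proof (intro conjI allI impI)
    fix U assume U: "openin (top_of_set {0..1::real}) U"
    have "openin X {x \<in> topspace X. f x \<in> U}"
      using openin_continuous_map_preimage[OF f U] .
    moreover have "U \<subseteq> {0..1}" using openin_subset[OF U] by simp
    ultimately have "openin Y U" using oY by auto
    moreover have "{x \<in> {0..1}. id x \<in> U} = U" using \<open>U \<subseteq> {0..1}\<close> by auto
    ultimately show "openin Y {x \<in> {0..1}. id x \<in> U}" by simp
  qed auto
  show ?thesis
    unfolding quotient_map_def
  proof (intro conjI allI impI)
    show "f ` topspace X = topspace (top_of_set {0..1})" using surj by simp
  next
    fix U :: "real set" assume Usub: "U \<subseteq> topspace (top_of_set {0..1})"
    show "openin X {x \<in> topspace X. f x \<in> U} = openin (top_of_set {0..1}) U"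
    proof
      assume P: "openin X {x \<in> topspace X. f x \<in> U}"
      have UY: "openin Y U" using oY P Usub by auto
      show "openin (top_of_set {0..1}) U"
        unfolding openin_euclidean_subtopology_iff
      proof (intro conjI ballI)
        show "U \<subseteq> {0..1}" using Usub by simp
      next
        fix t assume tU: "t \<in> U"
        obtain V where V: "openin Y V" "connectedin Y V" "t \<in> V" "V \<subseteq> U"
          using lcY UY tU unfolding locally_connected_space by blast
        have "connectedin (top_of_set {0..1::real}) (id ` V)"
          using connectedin_continuous_map_image[OF idc V(2)] .
        then have "connected V" by (simp add: connectedin_subtopology)
        then have iV: "is_interval V" by (simp add: is_interval_connected_1)
        have PV: "openin X {x \<in> topspace X. f x \<in> V}" using oY V(1) by auto
        have Vsub: "V \<subseteq> {0..1}" using oY V(1) by auto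
        have A: "\<exists>s\<in>V. s < t" if "t > 0"
        proof (rule ccontr)
          assume "\<not> ?thesis"
          then have Vt: "\<forall>s\<in>V. t \<le> s" by auto
          define T where "T = {x \<in> topspace X. f x \<in> {t..}}"
          have "T = {x \<in> topspace X. f x \<in> V} \<union> {x \<in> topspace X. f x \<in> {t<..}}"
          proof (rule set_eqI)
            fix x show "x \<in> T \<longleftrightarrow> x \<in> {x \<in> topspace X. f x \<in> V} \<union> {x \<in> topspace X. f x \<in> {t<..}}"
              using Vt V(3) unfolding T_def by (cases "f x = t") auto
          qed
          moreover have "openin X {x \<in> topspace X. f x \<in> {t<..}}"
            using openin_continuous_map_preimage[OF fr, of "{t<..}"] by simp
          ultimately have "openin X T" using PV by auto
          moreover have "closedin X T"
            unfolding T_def using closedin_continuous_map_preimage[OF fr, of "{t..}"] by simp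
          moreover have "t \<in> f ` topspace X" using surj Vsub V(3) by auto
          then obtain p where "p \<in> topspace X" "f p = t" by auto
          moreover have "0 \<in> f ` topspace X" using surj by auto
          then obtain q where "q \<in> topspace X" "f q = 0" by auto
          ultimately show False
          proof -
            have "T = {} \<or> T = topspace X" using cX \<open>openin X T\<close> \<open>closedin X T\<close>
              unfolding connected_space_clopen_in by blast
            moreover have "p \<in> T" using \<open>p \<in> topspace X\<close> \<open>f p = t\<close> by (simp add: T_def)
            moreover have "q \<notin> T" using \<open>f q = 0\<close> that by (simp add: T_def)
            ultimately show False using \<open>q \<in> topspace X\<close> by blast
          qed
        qed
        have B: "\<exists>s\<in>V. s > t" if "t < 1"
        proof (rule ccontr)
          assume "\<not> ?thesis"
          then have Vt: "\<forall>s\<in>V. s \<le> t" by auto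
          define T where "T = {x \<in> topspace X. f x \<in> {..t}}"
          have "T = {x \<in> topspace X. f x \<in> V} \<union> {x \<in> topspace X. f x \<in> {..<t}}"
          proof (rule set_eqI)
            fix x show "x \<in> T \<longleftrightarrow> x \<in> {x \<in> topspace X. f x \<in> V} \<union> {x \<in> topspace X. f x \<in> {..<t}}"
              using Vt V(3) unfolding T_def by (cases "f x = t") auto
          qed
          moreover have "openin X {x \<in> topspace X. f x \<in> {..<t}}"
            using openin_continuous_map_preimage[OF fr, of "{..<t}"] by simp
          ultimately have "openin X T" using PV by auto
          moreover have "closedin X T"
            unfolding T_def using closedin_continuous_map_preimage[OF fr, of "{..t}"] by simp
          moreover have "t \<in> f ` topspace X" using surj Vsub V(3) by auto
          then obtain p where "p \<in> topspace X" "f p = t" by auto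
          moreover have "1 \<in> f ` topspace X" using surj by auto
          then obtain q where "q \<in> topspace X" "f q = 1" by auto
          ultimately show False
          proof -
            have "T = {} \<or> T = topspace X" using cX \<open>openin X T\<close> \<open>closedin X T\<close>
              unfolding connected_space_clopen_in by blast
            moreover have "p \<in> T" using \<open>p \<in> topspace X\<close> \<open>f p = t\<close> by (simp add: T_def)
            moreover have "q \<notin> T" using \<open>f q = 1\<close> that by (simp add: T_def)
            ultimately show False using \<open>q \<in> topspace X\<close> by blast
          qed
        qed
        obtain s1 where s1: "s1 \<le> t" "s1 \<in> V" "t > 0 \<Longrightarrow> s1 < t"
          using A V(3) by (cases "t > 0") auto
        obtain s2 where s2: "t \<le> s2" "s2 \<in> V" "t < 1 \<Longrightarrow> s2 > t"
          using B V(3) by (cases "t < 1") auto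
        define e where "e = min (if t > 0 then t - s1 else 1) (if t < 1 then s2 - t else 1)"
        have "e > 0" unfolding e_def using s1 s2 by auto
        moreover have "x' \<in> U" if "x' \<in> {0..1}" "dist x' t < e" for x'
        proof -
          have d: "\<bar>x' - t\<bar> < e" using that(2) by (simp add: dist_real_def)
          have "s1 \<le> x'"
          proof (cases "t > 0")
            case True
            then have "e \<le> t - s1" unfolding e_def by simp
            then show ?thesis using d by linarith
          next
            case False then show ?thesis using that s1 Vsub by auto
          qed
          moreover have "x' \<le> s2"
          proof (cases "t < 1")
            case True
            then have "e \<le> s2 - t" unfolding e_def by simp
            then show ?thesis using d by linarith
          next
            case False then show ?thesis using that s2 Vsub by auto
          qed
          ultimately have "x' \<in> V" using iV s1 s2 unfolding is_interval_1 by blast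
          then show ?thesis using V(4) by auto
        qed
        ultimately show "\<exists>e>0. \<forall>x'\<in>{0..1}. dist x' t < e \<longrightarrow> x' \<in> U" by blast
      qed
    next
      assume "openin (top_of_set {0..1}) U"
      then show "openin X {x \<in> topspace X. f x \<in> U}"
        using openin_continuous_map_preimage[OF f] by blast
    qed
  qed
qed


lemma urysohn_pts:
  assumes N: "normal_space X" and H: "Hausdorff_space X"
    and a: "a \<in> topspace X" and b: "b \<in> topspace X" and ab: "a \<noteq> b"
  obtains f where "continuous_map X (top_of_set {0..1::real}) f" "f a = 0" "f b = 1"
proof -
  have t1: "t1_space X" using H by (simp add: Hausdorff_imp_t1_space)
  have ca: "closedin X {a}" "closedin X {b}"
    using t1 a b by (auto simp: t1_space_closedin_singleton)
  have dj: "disjnt {a} {b}" using ab by simp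
  obtain f where f: "continuous_map X (top_of_set {0..1::real}) f" "f ` {a} \<subseteq> {0}" "f ` {b} \<subseteq> {1}"
    by (rule Urysohn_lemma[OF N ca(1) ca(2) dj zero_le_one])
  have "f a = 0" "f b = 1" using f(2,3) by auto
  then show ?thesis using that f(1) by blast
qed

lemma surj_from_connected:
  assumes f: "continuous_map X (top_of_set {0..1::real}) f"
    and C: "connectedin X C" and a: "a \<in> C" and b: "b \<in> C" and fa: "f a = 0" and fb: "f b = 1"
  shows "f ` C = {0..1}"
proof -
  have "connectedin (top_of_set {0..1::real}) (f ` C)"
    using connectedin_continuous_map_image[OF f C] .
  then have c: "connected (f ` C)" and sub: "f ` C \<subseteq> {0..1}"
    by (simp_all add: connectedin_subtopology)
  have "{0..1} \<subseteq> f ` C"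
  proof
    fix y :: real assume "y \<in> {0..1}"
    show "y \<in> f ` C"
    proof -
      have h0: "0 \<in> f ` C" by (rule rev_image_eqI[OF a]) (simp add: fa)
      have h1: "1 \<in> f ` C" by (rule rev_image_eqI[OF b]) (simp add: fb)
      show ?thesis using connected_contains_Icc[OF c h0 h1] \<open>y \<in> {0..1}\<close> by blast
    qed
  qed
  then show ?thesis using sub by blast
qed

theorem mainTheorem6:
  fixes X :: "'a topology"
  assumes "infinite (topspace X)"
    and "connected_space X"
    and "normal_space X"
    and "Hausdorff_space X"
    and "\<not> (\<exists>f. quotient_map X (top_of_set {0..1::real}) f)"
  shows "punctiform X \<and> \<not> locally_connected_space X"
proof
  show "punctiform X"
    unfolding punctiform_def
  proof (intro allI impI notI)
    fix C assume C: "C \<subseteq> topspace X \<and> compactin X C \<and> connectedin X C"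
      and "\<exists>x y. x \<in> C \<and> y \<in> C \<and> x \<noteq> y"
    then obtain x y where xy: "x \<in> C" "y \<in> C" "x \<noteq> y" by blast
    obtain f where f: "continuous_map X (top_of_set {0..1::real}) f" "f x = 0" "f y = 1"
      using urysohn_pts[OF assms(3) assms(4), of x y] xy C by blast
    have fC: "f ` C = {0..1}"
      using surj_from_connected[OF f(1) _ xy(1) xy(2) f(2) f(3)] C by blast
    have fX: "f ` topspace X = {0..1}"
      using fC C continuous_map_image_subset_topspace[OF f(1)] image_mono[of C "topspace X" f] by auto
    have fCc: "continuous_map (subtopology X C) (top_of_set {0..1::real}) f"
      using f(1) continuous_map_from_subtopology by blast
    have qC: "quotient_map (subtopology X C) (top_of_set {0..1::real}) f"
      by (rule continuous_imp_quotient_map[OF fCc])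
         (use C fC in \<open>auto simp: compact_space_subtopology Hausdorff_space_subtopology\<close>)
    have "quotient_map X (top_of_set {0..1::real}) f"
      unfolding quotient_map_def
    proof (intro conjI allI impI)
      show "f ` topspace X = topspace (top_of_set {0..1})" using fX by simp
    next
      fix U :: "real set" assume Usub: "U \<subseteq> topspace (top_of_set {0..1})"
      show "openin X {x \<in> topspace X. f x \<in> U} = openin (top_of_set {0..1}) U"
      proof
        assume P: "openin X {x \<in> topspace X. f x \<in> U}"
        have "openin (subtopology X C) (C \<inter> {x \<in> topspace X. f x \<in> U})"
          using P by (simp add: openin_subtopology_Int2)
        moreover have "C \<inter> {x \<in> topspace X. f x \<in> U} = {x \<in> topspace (subtopology X C). f x \<in> U}"
          using C by auto
        ultimately show "openin (top_of_set {0..1}) U"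
          using qC Usub unfolding quotient_map_def by auto
      next
        assume "openin (top_of_set {0..1}) U"
        then show "openin X {x \<in> topspace X. f x \<in> U}"
          using openin_continuous_map_preimage[OF f(1)] by blast
      qed
    qed
    then show False using assms(5) by blast
  qed
next
  show "\<not> locally_connected_space X"
  proof
    assume lc: "locally_connected_space X"
    have "topspace X \<noteq> {}" using assms(1) by auto
    then obtain a where a: "a \<in> topspace X" by blast
    have "infinite (topspace X - {a})" using assms(1) by simp
    then have "topspace X - {a} \<noteq> {}" by (metis Diff_eq_empty_iff finite.emptyI finite.insertI finite_subset)
    then obtain b where b: "b \<in> topspace X - {a}" by blast
    obtain f where f: "continuous_map X (top_of_set {0..1::real}) f" "f a = 0" "f b = 1"
      using urysohn_pts[OF assms(3) assms(4), of a b] a b by blast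
    have "f ` topspace X = {0..1}"
      using surj_from_connected[OF f(1) _ a _ f(2) f(3)] b assms(2)
      by (simp add: connectedin_topspace)
    then have "quotient_map X (top_of_set {0..1::real}) f"
      using lc_quotient[OF assms(2) lc f(1)] by blast
    then show False using assms(5) by blast
  qed
qed

end
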